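(* Let $\mathbb{X}$ be an idempotent semifield as described in the context. Let $A\in\mathbb{X}^{m\times n}$ be a regular matrix and $\bm{b},\bm{c}\in\mathbb{X}^{m}$ regular vectors, and put $\Delta=\sqrt{(A(\bm{c}^{-}A)^{-})^{-}\bm{b}}$, so that $\min_{\bm{x}\in\mathbb{X}_{+}^{n}}\big((A\bm{x})^{-}\bm{b}\oplus\bm{c}^{-}A\bm{x}\big)=\Delta$. Then: (i) every vector $\bm{x}$ at which this minimum is attained (i.e. $(A\bm{x})^{-}\bm{b}\oplus\bm{c}^{-}A\bm{x}=\Delta$) satisfies $\Delta^{-1}\bm{b}\le A\bm{x}\le\Delta\bm{c}$; (ii) if $\bm{u}$ satisfies $A\bm{u}=\bm{b}$, then the minimum is attained at $\bm{x}=\Delta^{-1}\bm{u}$, i.e. $(A\bm{x})^{-}\bm{b}\oplus\bm{c}^{-}A\bm{x}=\Delta$ for this $\bm{x}$; (iii) if $\bm{v}$ satisfies $A\bm{v}=\bm{c}$, then the minimum is attained at $\bm{x}=\Delta\bm{v}$.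
   Context: $\mathbb{X}$ is a commutative semiring $(\mathbb{X},\mathbb{0},\mathbb{1},\oplus,\otimes)$ with zero $\mathbb{0}$ and identity $\mathbb{1}$, in which addition is idempotent and every nonzero element has a multiplicative inverse $x^{-1}$ (an idempotent semifield). The semifield is assumed radicable (rational powers of nonzero elements exist; $\sqrt{x}=x^{1/2}$) and totally ordered by the order induced by addition: $x\le y$ iff $x\oplus y=y$. The multiplication sign is omitted. $\mathbb{X}_{+}=\mathbb{X}\setminus\{\mathbb{0}\}$, and $\mathbb{X}_{+}^{n}$ is the set of regular $n$-vectors (all entries nonzero); a matrix is regular if it has no zero rows. Matrix/vector operations use $\oplus,\otimes$ in place of $+,\times$; vector inequalities are componentwise. The pseudo-inverse of a nonzero (column or row) vector $\bm{x}=(x_i)$ is the transposed vector $\bm{x}^{-}$ with entries $x_i^{-1}$ if $x_i\ne\mathbb{0}$ and $\mathbb{0}$ otherwise. *)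

theory Defs
  imports Main
begin

class idem_semifield = comm_semiring_1 + inverse + linorder +
  assumes le_iff_add: "x \<le> y \<longleftrightarrow> x + y = y"
  and right_inverse_nz: "x \<noteq> 0 \<Longrightarrow> x * inverse x = 1"
  and radicable: "x \<noteq> 0 \<Longrightarrow> 0 < n \<Longrightarrow> \<exists>y. y ^ n = x"

definition ssqrt :: "'a::idem_semifield \<Rightarrow> 'a" where
  "ssqrt x = (THE y. y * y = x)"

text \<open>Pseudo-inverse (transposition is implicit: row and column vectors are both
functions of the index).\<close>
definition pinv :: "('i \<Rightarrow> 'a::idem_semifield) \<Rightarrow> ('i \<Rightarrow> 'a)" where
  "pinv v = (\<lambda>i. if v i = 0 then 0 else inverse (v i))"

definition dotp :: "('i::finite \<Rightarrow> 'a::idem_semifield) \<Rightarrow> ('i \<Rightarrow> 'a) \<Rightarrow> 'a" where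
  "dotp u v = (\<Sum>i\<in>UNIV. u i * v i)"

definition mv :: "('m \<Rightarrow> 'n::finite \<Rightarrow> 'a::idem_semifield) \<Rightarrow> ('n \<Rightarrow> 'a) \<Rightarrow> ('m \<Rightarrow> 'a)" where
  "mv A x = (\<lambda>i. \<Sum>j\<in>UNIV. A i j * x j)"

definition vm :: "('m::finite \<Rightarrow> 'a::idem_semifield) \<Rightarrow> ('m \<Rightarrow> 'n \<Rightarrow> 'a) \<Rightarrow> ('n \<Rightarrow> 'a)" where
  "vm y A = (\<lambda>j. \<Sum>i\<in>UNIV. y i * A i j)"

definition smul :: "'a::idem_semifield \<Rightarrow> ('i \<Rightarrow> 'a) \<Rightarrow> ('i \<Rightarrow> 'a)" where
  "smul s v = (\<lambda>i. s * v i)"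

definition regular_vec :: "('i \<Rightarrow> 'a::idem_semifield) \<Rightarrow> bool" where
  "regular_vec v \<longleftrightarrow> (\<forall>i. v i \<noteq> 0)"

definition regular_mat :: "('m \<Rightarrow> 'n \<Rightarrow> 'a::idem_semifield) \<Rightarrow> bool" where
  "regular_mat A \<longleftrightarrow> (\<forall>i. \<exists>j. A i j \<noteq> 0)"

definition objf :: "('m::finite \<Rightarrow> 'n::finite \<Rightarrow> 'a::idem_semifield) \<Rightarrow> ('m \<Rightarrow> 'a) \<Rightarrow> ('m \<Rightarrow> 'a) \<Rightarrow> ('n \<Rightarrow> 'a) \<Rightarrow> 'a" where
  "objf A b c x = dotp (pinv (mv A x)) b + dotp (pinv c) (mv A x)"

definition Delta :: "('m::finite \<Rightarrow> 'n::finite \<Rightarrow> 'a::idem_semifield) \<Rightarrow> ('m \<Rightarrow> 'a) \<Rightarrow> ('m \<Rightarrow> 'a) \<Rightarrow> 'a" where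
  "Delta A b c = ssqrt (dotp (pinv (mv A (pinv (vm (pinv c) A)))) b)"

end

theory Submission
  imports Defs
begin

context idem_semifield
begin

lemma add_max: "x + y = max x y"
proof (cases "x \<le> y")
  case True thus ?thesis using le_iff_add by (simp add: max_def)
next
  case False
  hence "y \<le> x" by simp
  hence "y + x = x" using le_iff_add by blast
  thus ?thesis using False by (simp add: max_def add.commute)
qed

lemma zero_le': "0 \<le> x" using le_iff_add by simp

lemma mult_right_mono': "a \<le> b \<Longrightarrow> a * c \<le> b * c"
  using le_iff_add by (metis distrib_right)

lemma mult_left_mono': "a \<le> b \<Longrightarrow> c * a \<le> c * b"
  using mult_right_mono' by (simp add: mult.commute)

lemma left_inv_nz: "x \<noteq> 0 \<Longrightarrow> inverse x * x = 1"
  using right_inverse_nz by (simp add: mult.commute)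

lemma no_zero_div: "x \<noteq> 0 \<Longrightarrow> y \<noteq> 0 \<Longrightarrow> x * y \<noteq> 0"
proof
  assume "x \<noteq> 0" "y \<noteq> 0" "x * y = 0"
  have "y = (inverse x * x) * y" using left_inv_nz \<open>x \<noteq> 0\<close> by simp
  also have "\<dots> = inverse x * (x * y)" by (simp add: mult.assoc)
  finally show False using \<open>x*y=0\<close> \<open>y\<noteq>0\<close> by simp
qed

lemma inv_nz: "x \<noteq> 0 \<Longrightarrow> inverse x \<noteq> 0"
proof
  assume "x \<noteq> 0" "inverse x = 0"
  hence "x * inverse x = 1" "x * inverse x = 0" using right_inverse_nz[of x] by auto
  thus False by simp
qed

lemma inv_mult: "x \<noteq> 0 \<Longrightarrow> y \<noteq> 0 \<Longrightarrow> inverse (x * y) = inverse x * inverse y"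
proof -
  assume x: "x \<noteq> 0" and y: "y \<noteq> 0"
  hence z: "x * y \<noteq> 0" by (rule no_zero_div)
  have "inverse (x*y) = inverse (x*y) * (x * inverse x) * (y * inverse y)"
    using x y right_inverse_nz by simp
  also have "\<dots> = ((x*y) * inverse (x*y)) * inverse x * inverse y"
    by (simp add: ac_simps)
  also have "\<dots> = inverse x * inverse y" using right_inverse_nz[OF z] by simp
  finally show ?thesis .
qed

lemma inv_inv: "x \<noteq> 0 \<Longrightarrow> inverse (inverse x) = x"
proof -
  assume x: "x \<noteq> 0"
  have "inverse (inverse x) = inverse (inverse x) * (inverse x * x)" using left_inv_nz[OF x] by simp
  also have "\<dots> = (inverse x * inverse (inverse x)) * x" by (simp add: ac_simps)
  also have "\<dots> = x" using right_inverse_nz[OF inv_nz[OF x]] by simp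
  finally show ?thesis .
qed

lemma le_div: "c \<noteq> 0 \<Longrightarrow> (inverse c * a \<le> b \<longleftrightarrow> a \<le> c * b)"
proof
  assume c: "c \<noteq> 0" and h: "inverse c * a \<le> b"
  have "c * (inverse c * a) \<le> c * b" using mult_left_mono'[OF h] .
  thus "a \<le> c * b" using right_inverse_nz[OF c] by (simp add: mult.assoc[symmetric])
next
  assume c: "c \<noteq> 0" and h: "a \<le> c * b"
  have "inverse c * a \<le> inverse c * (c * b)" using mult_left_mono'[OF h] .
  thus "inverse c * a \<le> b" using left_inv_nz[OF c] by (simp add: mult.assoc[symmetric])
qed

lemma le_zero_iff: "x \<le> 0 \<longleftrightarrow> x = 0"
proof
  assume "x \<le> 0" thus "x = 0" using zero_le'[of x] by (rule order.antisym)
qed simp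

lemma sum_le_iff: "finite S \<Longrightarrow> (sum f S \<le> c \<longleftrightarrow> (\<forall>i\<in>S. f i \<le> c))"
  by (induction S rule: finite_induct) (auto simp: add_max zero_le')

lemma mem_le_sum: "finite S \<Longrightarrow> i \<in> S \<Longrightarrow> f i \<le> sum f S"
  using sum_le_iff[of S f "sum f S"] by auto

lemma sum_attained: "finite S \<Longrightarrow> S \<noteq> {} \<Longrightarrow> \<exists>i\<in>S. sum f S = f i"
proof (induction S rule: finite_ne_induct)
  case (singleton x) thus ?case by simp
next
  case (insert x F)
  then obtain i where "i \<in> F" "sum f F = f i" by auto
  thus ?case using insert by (auto simp: add_max max_def)
qed

lemma sum_const_ne: "finite S \<Longrightarrow> S \<noteq> {} \<Longrightarrow> sum (\<lambda>_. a) S = a"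
  using sum_attained[of S "\<lambda>_. a"] by blast

lemma sum_nz: "finite S \<Longrightarrow> i \<in> S \<Longrightarrow> f i \<noteq> 0 \<Longrightarrow> sum f S \<noteq> 0"
  using mem_le_sum[of S i f] le_zero_iff by metis

end

lemma ssqrt_prop: fixes x :: "'a::idem_semifield" shows "x \<noteq> 0 \<Longrightarrow> ssqrt x * ssqrt x = x"
proof -
  assume x: "x \<noteq> 0"
  obtain y where y: "y ^ 2 = x" using radicable[where x=x and n=2] x by auto
  hence yy: "y * y = x" by (simp add: power2_eq_square)
  have "\<exists>!y. y * y = x"
  proof (rule ex1I[of _ y])
    show "y * y = x" by (rule yy)
  next
    fix z assume z: "z * z = x"
    have yz: "y \<noteq> 0" "z \<noteq> 0" using yy z x by auto
    show "z = y"
    proof (cases "z \<le> y")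
      case True
      have "z * z \<le> z * y" using mult_left_mono'[OF True] .
      moreover have "z * y \<le> y * y" using mult_right_mono'[OF True] .
      ultimately have "z * y = y * y" using z yy order.antisym by auto
      hence "(z * y) * inverse y = (y * y) * inverse y" by simp
      thus ?thesis using right_inverse_nz[OF yz(1)] by (simp add: mult.assoc)
    next
      case False
      hence F: "y \<le> z" by simp
      have "y * y \<le> y * z" using mult_left_mono'[OF F] .
      moreover have "y * z \<le> z * z" using mult_right_mono'[OF F] .
      ultimately have "y * z = z * z" using z yy order.antisym by auto
      hence "(y * z) * inverse z = (z * z) * inverse z" by simp
      thus ?thesis using right_inverse_nz[OF yz(2)] by (simp add: mult.assoc)
    qed
  qed
  hence "ssqrt x * ssqrt x = x" unfolding ssqrt_def by (rule theI')
  thus ?thesis .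
qed

theorem corollary1:
  fixes A :: "'m::finite \<Rightarrow> 'n::finite \<Rightarrow> 'a::idem_semifield"
    and b c :: "'m \<Rightarrow> 'a"
  assumes "regular_mat A" and "regular_vec b" and "regular_vec c"
  shows "(\<forall>x. regular_vec x \<and> objf A b c x = Delta A b c \<longrightarrow>
            (\<forall>i. inverse (Delta A b c) * b i \<le> mv A x i \<and> mv A x i \<le> Delta A b c * c i))
       \<and> (\<forall>u. mv A u = b \<longrightarrow> objf A b c (smul (inverse (Delta A b c)) u) = Delta A b c)
       \<and> (\<forall>v. mv A v = c \<longrightarrow> objf A b c (smul (Delta A b c) v) = Delta A b c)"
proof -
  have bnz: "\<And>i. b i \<noteq> 0" and cnz: "\<And>i. c i \<noteq> 0"
    using assms(2,3) unfolding regular_vec_def by auto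
  define w where "w = vm (pinv c) A"
  define p where "p = mv A (pinv w)"
  define D where "D = dotp (pinv p) b"
  define d where "d = Delta A b c"
  have dD: "d = ssqrt D" unfolding d_def D_def p_def w_def Delta_def ..
  have wge: "\<And>i k. inverse (c i) * A i k \<le> w k"
  proof -
    fix i k
    have "pinv c i * A i k \<le> w k" unfolding w_def vm_def
      by (rule mem_le_sum) auto
    thus "inverse (c i) * A i k \<le> w k" using cnz by (simp add: pinv_def)
  qed
  have wnz: "\<And>i k. A i k \<noteq> 0 \<Longrightarrow> w k \<noteq> 0"
  proof -
    fix i k assume "A i k \<noteq> 0"
    hence "inverse (c i) * A i k \<noteq> 0" using no_zero_div inv_nz cnz by blast
    thus "w k \<noteq> 0" using wge[of i k] le_zero_iff by (metis order.trans)
  qed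
  have pnz: "\<And>i. p i \<noteq> 0"
  proof -
    fix i
    obtain j where j: "A i j \<noteq> 0" using assms(1) unfolding regular_mat_def by auto
    have "A i j * pinv w j \<noteq> 0" using no_zero_div[OF j inv_nz[OF wnz[OF j]]] wnz[OF j] by (simp add: pinv_def)
    thus "p i \<noteq> 0" unfolding p_def mv_def using sum_nz[OF finite UNIV_I, of "\<lambda>j. A i j * pinv w j" j] by blast
  qed
  have ple: "\<And>i. p i \<le> c i"
  proof -
    fix i
    have "\<forall>k\<in>UNIV. A i k * pinv w k \<le> c i"
    proof
      fix k
      show "A i k * pinv w k \<le> c i"
      proof (cases "A i k = 0")
        case True thus ?thesis by (simp add: zero_le')
      next
        case False
        hence wk: "w k \<noteq> 0" by (rule wnz)
        have "A i k \<le> c i * w k"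
          using le_div[OF cnz[of i]] wge[of i k] by blast
        hence "inverse (w k) * A i k \<le> c i"
          using le_div[OF wk] by (simp add: mult.commute)
        thus ?thesis using wk by (simp add: pinv_def mult.commute)
      qed
    qed
    thus "p i \<le> c i" unfolding p_def mv_def by (subst sum_le_iff) auto
  qed
  have invp: "\<And>i. inverse (c i) \<le> inverse (p i)"
  proof -
    fix i
    have "inverse (c i) * p i \<le> 1" using le_div[OF cnz[of i]] ple[of i] by simp
    hence "inverse (c i) * p i * inverse (p i) \<le> 1 * inverse (p i)" by (rule mult_right_mono')
    thus "inverse (c i) \<le> inverse (p i)" using right_inverse_nz[OF pnz[of i]] by (simp add: mult.assoc)
  qed
  have cbD: "\<And>i. inverse (c i) * b i \<le> D"
  proof -
    fix i
    have "inverse (c i) * b i \<le> inverse (p i) * b i" using invp mult_right_mono' by blast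
    also have "\<dots> \<le> D" unfolding D_def dotp_def using mem_le_sum[of UNIV i "\<lambda>i. pinv p i * b i"] pnz
      by (simp add: pinv_def)
    finally show "inverse (c i) * b i \<le> D" .
  qed
  have Dnz: "D \<noteq> 0"
  proof -
    fix i :: 'm
    have "pinv p i * b i \<noteq> 0" using no_zero_div[OF inv_nz[OF pnz[of i]] bnz[of i]] pnz[of i] by (simp add: pinv_def)
    thus ?thesis unfolding D_def dotp_def using sum_nz[OF finite UNIV_I, of "\<lambda>i. pinv p i * b i" i] by blast
  qed
  have dd: "d * d = D" using ssqrt_prop[OF Dnz] dD by simp
  have dnz: "d \<noteq> 0" using dd Dnz by (metis mult_zero_left)
  have idD: "inverse d * D = d" using dd left_inv_nz[OF dnz] by (metis mult.assoc mult_1)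
  have P1: "\<forall>x. regular_vec x \<and> objf A b c x = d \<longrightarrow>
            (\<forall>i. inverse d * b i \<le> mv A x i \<and> mv A x i \<le> d * c i)"
  proof (intro allI impI, elim conjE)
    fix x i assume rx: "regular_vec x" and ob: "objf A b c x = d"
    let ?y = "mv A x"
    have ynz: "?y i \<noteq> 0"
    proof -
      obtain j where j: "A i j \<noteq> 0" using assms(1) unfolding regular_mat_def by auto
      have "A i j * x j \<noteq> 0" using j rx no_zero_div unfolding regular_vec_def by blast
      thus ?thesis unfolding mv_def using sum_nz[OF finite UNIV_I, of "\<lambda>j. A i j * x j" j] by blast
    qed
    have h1: "dotp (pinv ?y) b \<le> d" and h2: "dotp (pinv c) ?y \<le> d"
      using ob unfolding objf_def add_max by auto
    have "inverse (?y i) * b i \<le> d"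
      using h1 unfolding dotp_def using mem_le_sum[of UNIV i "\<lambda>i. pinv ?y i * b i"] ynz
      by (simp add: pinv_def)
    hence "b i \<le> ?y i * d" using le_div[OF ynz] by simp
    hence "b i \<le> d * ?y i" by (simp add: mult.commute)
    hence a1: "inverse d * b i \<le> ?y i" using le_div[OF dnz] by blast
    have "inverse (c i) * ?y i \<le> d"
      using h2 unfolding dotp_def using mem_le_sum[of UNIV i "\<lambda>i. pinv c i * ?y i"] cnz
      by (simp add: pinv_def)
    hence "?y i \<le> c i * d" using le_div[OF cnz] by simp
    thus "inverse d * b i \<le> ?y i \<and> ?y i \<le> d * c i" using a1 by (simp add: mult.commute)
  qed
  have mvs: "\<And>s u. mv A (smul s u) = smul s (mv A u)"
    unfolding mv_def smul_def by (auto simp: sum_distrib_left ac_simps)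
  have P2: "\<forall>u. mv A u = b \<longrightarrow> objf A b c (smul (inverse d) u) = d"
  proof (intro allI impI)
    fix u assume u: "mv A u = b"
    have y: "mv A (smul (inverse d) u) = smul (inverse d) b" using mvs u by simp
    have t1: "dotp (pinv (smul (inverse d) b)) b = d"
    proof -
      have "\<And>i. pinv (smul (inverse d) b) i * b i = d"
      proof -
        fix i
        have "inverse d * b i \<noteq> 0" using no_zero_div inv_nz dnz bnz by blast
        hence "pinv (smul (inverse d) b) i * b i = inverse (inverse d * b i) * b i"
          by (simp add: pinv_def smul_def)
        also have "\<dots> = d * (inverse (b i) * b i)"
          using inv_mult[OF inv_nz[OF dnz] bnz[of i]] inv_inv[OF dnz] by (simp add: mult.assoc)
        finally show "pinv (smul (inverse d) b) i * b i = d" using left_inv_nz[OF bnz[of i]] by simp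
      qed
      thus ?thesis unfolding dotp_def using sum_const_ne[of "UNIV::'m set" d] by (simp del: sum_constant)
    qed
    have t2: "dotp (pinv c) (smul (inverse d) b) \<le> d"
      unfolding dotp_def
    proof (subst sum_le_iff, simp, intro ballI)
      fix i
      have "inverse d * (inverse (c i) * b i) \<le> inverse d * D" using cbD mult_left_mono' by blast
      thus "pinv c i * smul (inverse d) b i \<le> d" using cnz idD
        by (simp add: pinv_def smul_def ac_simps)
    qed
    show "objf A b c (smul (inverse d) u) = d"
      unfolding objf_def y t1 add_max using t2 by (simp add: max_def)
  qed
  have P3: "\<forall>v. mv A v = c \<longrightarrow> objf A b c (smul d v) = d"
  proof (intro allI impI)
    fix v assume v: "mv A v = c"
    have y: "mv A (smul d v) = smul d c" using mvs v by simp
    have t2: "dotp (pinv c) (smul d c) = d"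
    proof -
      have "\<And>i. pinv c i * smul d c i = d"
      proof -
        fix i
        have "pinv c i * smul d c i = d * (c i * inverse (c i))" using cnz[of i] by (simp add: pinv_def smul_def ac_simps)
        thus "pinv c i * smul d c i = d" using right_inverse_nz[OF cnz[of i]] by simp
      qed
      thus ?thesis unfolding dotp_def using sum_const_ne[of "UNIV::'m set" d] by (simp del: sum_constant)
    qed
    have t1: "dotp (pinv (smul d c)) b \<le> d"
      unfolding dotp_def
    proof (subst sum_le_iff, simp, intro ballI)
      fix i
      have nz: "d * c i \<noteq> 0" using no_zero_div dnz cnz by blast
      have "inverse d * (inverse (c i) * b i) \<le> inverse d * D" using cbD mult_left_mono' by blast
      thus "pinv (smul d c) i * b i \<le> d" using nz idD inv_mult[OF dnz cnz[of i]]
        by (simp add: pinv_def smul_def ac_simps)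
    qed
    show "objf A b c (smul d v) = d"
      unfolding objf_def y t2 add_max using t1 by (simp add: max_def)
  qed
  show ?thesis using P1 P2 P3 unfolding d_def by blast
qed

end
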